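(* In the segregation process, suppose that $F$ is an $x$-firewall incubator (in the initial configuration) and there exist a left-pseudo-transcript and a right-pseudo-transcript of $F$ all of whose partial sums are non-negative. Then $F$ becomes an $x$-firewall, i.e. at some time every node of $F$ is occupied by an individual of type $x$.
   Context: Segregation process: the nodes of an $n$-cycle are indexed mod $n$; at every time there is a bijection between $n$ individuals and the nodes, each individual having type $x$ or $o$; initially each node independently gets label $x$ or $o$ with probability $1/2$. With sign $+1$ for $x$ and $-1$ for $o$, the $x$-bias $\beta_t(i)$ of node $i$ at time $t$ is the sum of the signs of the labels of nodes $i-w,\dots,i+w$. An $x$-individual at $i$ is happy iff $\beta_t(i)>0$, an $o$-individual iff $\beta_t(i)<0$; otherwise unhappy. At each time step two individuals are chosen uniformly at random (a proposed swap); if both are unhappy and of opposite types they exchange nodes, otherwise nothing changes. A block is a sequence of consecutive nodes; a firewall is a block of at least $w+1$ consecutive nodes with identical labels. An $x$-firewall incubator is a block $F$ made up of consecutive blocks $D_L,I,D_R$ (left to right) such that $|D_L|=|D_R|=w+1$, $\beta_0(i)>\sqrt w$ for all $i\in F$, the minimum of $\beta_0$ over $D_L$ is attained at its left endpoint and the minimum of $\beta_0$ over $D_R$ is attained at its right endpoint. $A_L$, $A_R$ denote the blocks of $w$ nodes immediately to the left and right of $F$. The satisfaction time of an individual is the first time at which it is selected for a proposed swap together with an unhappy individual of the opposite type ($\infty$ if none); an individual is impatient at time $t$ if it is unhappy at time $t$ and $t$ is at most its satisfaction time. A left attacking $x$ is an $x$-individual in $A_L$ at time $0$; a left defending $o$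 is an $o$-individual in $D_L$ at time $0$; these are the left combatants (right combatants defined analogously with $A_R,D_R$). The left-transcript is the sign sequence obtained by listing the left combatants in reverse (decreasing) order of satisfaction time and writing $+1$ for each attacking $x$ and $-1$ for each defending $o$; the right-transcript is defined analogously. If there exists a time $t_0$ at which no individual in $F$ is impatient, any sign sequence obtained from the left- (resp. right-) transcript by permuting the signs associated to individuals whose satisfaction time is after $t_0$, while fixing all other signs, is a left- (resp. right-) pseudo-transcript. The $k$-th partial sum of a sequence is the sum of its first $k$ elements. *)

theory Defs
  imports Complex_Main "HOL-Library.Extended_Nat" "HOL-Library.Multiset"
begin

text \<open>Segregation process on the n-cycle with nodes 0..n-1 (indices mod n) and
  neighbourhood radius w.  Individuals are 0..n-1; individual a has type
  ty a (True = x, False = o).  At time 0 individual a sits at node a (so the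
  initial label of node i is ty i).  A configuration is an occupant function
  oc : node => individual.  P t = (a,b) is the pair of individuals proposed
  for a swap at step t; the configuration at time t+1 results from it.\<close>

definition sgnb :: "bool \<Rightarrow> int" where
  "sgnb b = (if b then 1 else -1)"

definition nd :: "nat \<Rightarrow> nat \<Rightarrow> int \<Rightarrow> nat" where
  "nd n s k = nat ((int s + k) mod int n)"

definition bias_of :: "nat \<Rightarrow> nat \<Rightarrow> (nat \<Rightarrow> bool) \<Rightarrow> (nat \<Rightarrow> nat) \<Rightarrow> nat \<Rightarrow> int" where
  "bias_of n w ty oc i = (\<Sum>j\<in>{- int w..int w}. sgnb (ty (oc (nd n i j))))"

definition unhappy_node_of :: "nat \<Rightarrow> nat \<Rightarrow> (nat \<Rightarrow> bool) \<Rightarrow> (nat \<Rightarrow> nat) \<Rightarrow> nat \<Rightarrow> bool" where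
  "unhappy_node_of n w ty oc v =
     (if ty (oc v) then bias_of n w ty oc v \<le> 0 else bias_of n w ty oc v \<ge> 0)"

definition unhappy_ind_of :: "nat \<Rightarrow> nat \<Rightarrow> (nat \<Rightarrow> bool) \<Rightarrow> (nat \<Rightarrow> nat) \<Rightarrow> nat \<Rightarrow> bool" where
  "unhappy_ind_of n w ty oc a = (\<exists>v<n. oc v = a \<and> unhappy_node_of n w ty oc v)"

definition step :: "nat \<Rightarrow> nat \<Rightarrow> (nat \<Rightarrow> bool) \<Rightarrow> (nat \<Rightarrow> nat) \<Rightarrow> nat \<times> nat \<Rightarrow> (nat \<Rightarrow> nat)" where
  "step n w ty oc p =
     (let a = fst p; b = snd p in
      if unhappy_ind_of n w ty oc a \<and> unhappy_ind_of n w ty oc b \<and> ty a \<noteq> ty b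
      then (\<lambda>v. if oc v = a then b else if oc v = b then a else oc v)
      else oc)"

primrec occ :: "nat \<Rightarrow> nat \<Rightarrow> (nat \<Rightarrow> bool) \<Rightarrow> (nat \<Rightarrow> nat \<times> nat) \<Rightarrow> nat \<Rightarrow> (nat \<Rightarrow> nat)" where
  "occ n w ty P 0 = (\<lambda>v. v)"
| "occ n w ty P (Suc t) = step n w ty (occ n w ty P t) (P t)"

definition lab :: "nat \<Rightarrow> nat \<Rightarrow> (nat \<Rightarrow> bool) \<Rightarrow> (nat \<Rightarrow> nat \<times> nat) \<Rightarrow> nat \<Rightarrow> nat \<Rightarrow> bool" where
  "lab n w ty P t v = ty (occ n w ty P t v)"

definition bias :: "nat \<Rightarrow> nat \<Rightarrow> (nat \<Rightarrow> bool) \<Rightarrow> (nat \<Rightarrow> nat \<times> nat) \<Rightarrow> nat \<Rightarrow> nat \<Rightarrow> int" where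
  "bias n w ty P t i = bias_of n w ty (occ n w ty P t) i"

definition unhappy :: "nat \<Rightarrow> nat \<Rightarrow> (nat \<Rightarrow> bool) \<Rightarrow> (nat \<Rightarrow> nat \<times> nat) \<Rightarrow> nat \<Rightarrow> nat \<Rightarrow> bool" where
  "unhappy n w ty P t a = unhappy_ind_of n w ty (occ n w ty P t) a"

definition satisfied_at :: "nat \<Rightarrow> nat \<Rightarrow> (nat \<Rightarrow> bool) \<Rightarrow> (nat \<Rightarrow> nat \<times> nat) \<Rightarrow> nat \<Rightarrow> nat \<Rightarrow> bool" where
  "satisfied_at n w ty P t a =
     (\<exists>b. (P t = (a, b) \<or> P t = (b, a)) \<and> unhappy n w ty P t b \<and> ty b \<noteq> ty a)"

definition sat_time :: "nat \<Rightarrow> nat \<Rightarrow> (nat \<Rightarrow> bool) \<Rightarrow> (nat \<Rightarrow> nat \<times> nat) \<Rightarrow> nat \<Rightarrow> enat" where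
  "sat_time n w ty P a =
     (if \<exists>t. satisfied_at n w ty P t a
      then enat (LEAST t. satisfied_at n w ty P t a) else \<infinity>)"

definition impatient :: "nat \<Rightarrow> nat \<Rightarrow> (nat \<Rightarrow> bool) \<Rightarrow> (nat \<Rightarrow> nat \<times> nat) \<Rightarrow> nat \<Rightarrow> nat \<Rightarrow> bool" where
  "impatient n w ty P t a = (unhappy n w ty P t a \<and> enat t \<le> sat_time n w ty P a)"

text \<open>The block F consists of the m nodes at offsets 0..m-1 from node s.
  D_L = offsets 0..w, D_R = offsets m-w-1..m-1, A_L = offsets -w..-1,
  A_R = offsets m..m+w-1.\<close>
definition x_firewall_incubator :: "nat \<Rightarrow> nat \<Rightarrow> (nat \<Rightarrow> bool) \<Rightarrow> (nat \<Rightarrow> nat \<times> nat) \<Rightarrow> nat \<Rightarrow> nat \<Rightarrow> bool" where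
  "x_firewall_incubator n w ty P s m =
     (2 * (w + 1) \<le> m \<and>
      (\<forall>k\<in>{0..<int m}. real_of_int (bias n w ty P 0 (nd n s k)) > sqrt (real w)) \<and>
      (\<forall>k\<in>{0..int w}. bias n w ty P 0 (nd n s 0) \<le> bias n w ty P 0 (nd n s k)) \<and>
      (\<forall>k\<in>{int m - int w - 1..int m - 1}.
          bias n w ty P 0 (nd n s (int m - 1)) \<le> bias n w ty P 0 (nd n s k)))"

text \<open>Combatants (individuals, identified with their initial nodes):
  left attacking x's (x-individuals in A_L at time 0) and left defending o's
  (o-individuals in D_L at time 0); similarly on the right.\<close>
definition left_combatants :: "nat \<Rightarrow> nat \<Rightarrow> (nat \<Rightarrow> bool) \<Rightarrow> nat \<Rightarrow> nat \<Rightarrow> nat set" where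
  "left_combatants n w ty s m =
     {a. (\<exists>k\<in>{- int w..-1}. a = nd n s k) \<and> ty a} \<union>
     {a. (\<exists>k\<in>{0..int w}. a = nd n s k) \<and> \<not> ty a}"

definition right_combatants :: "nat \<Rightarrow> nat \<Rightarrow> (nat \<Rightarrow> bool) \<Rightarrow> nat \<Rightarrow> nat \<Rightarrow> nat set" where
  "right_combatants n w ty s m =
     {a. (\<exists>k\<in>{int m..int m + int w - 1}. a = nd n s k) \<and> ty a} \<union>
     {a. (\<exists>k\<in>{int m - int w - 1..int m - 1}. a = nd n s k) \<and> \<not> ty a}"

definition calm_time :: "nat \<Rightarrow> nat \<Rightarrow> (nat \<Rightarrow> bool) \<Rightarrow> (nat \<Rightarrow> nat \<times> nat) \<Rightarrow> nat \<Rightarrow> nat \<Rightarrow> nat \<Rightarrow> bool" where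
  "calm_time n w ty P s m t0 =
     (\<forall>k\<in>{0..<int m}. \<not> impatient n w ty P t0 (occ n w ty P t0 (nd n s k)))"

text \<open>Pseudo-transcript of a set C of combatants: cs lists C in reverse
  (non-increasing) order of satisfaction time; the sign sequence sg agrees with the
  signs of cs at every position whose satisfaction time is at most t0, and the signs at
  the remaining positions are permuted (equivalently: same multiset overall).\<close>
definition pseudo_transcript :: "nat \<Rightarrow> nat \<Rightarrow> (nat \<Rightarrow> bool) \<Rightarrow> (nat \<Rightarrow> nat \<times> nat) \<Rightarrow> nat \<Rightarrow> nat \<Rightarrow> nat set \<Rightarrow> int list \<Rightarrow> bool" where
  "pseudo_transcript n w ty P s m C sg =
     (\<exists>t0 cs. calm_time n w ty P s m t0 \<and>
        distinct cs \<and> set cs = C \<and>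
        sorted_wrt (\<lambda>a b. sat_time n w ty P b \<le> sat_time n w ty P a) cs \<and>
        length sg = length cs \<and>
        mset sg = mset (map (\<lambda>a. sgnb (ty a)) cs) \<and>
        (\<forall>i<length cs. sat_time n w ty P (cs ! i) \<le> enat t0 \<longrightarrow> sg ! i = sgnb (ty (cs ! i))))"

definition partial_sums_nonneg :: "int list \<Rightarrow> bool" where
  "partial_sums_nonneg sg = (\<forall>k\<le>length sg. sum_list (take k sg) \<ge> 0)"

end

theory Submission
  imports Defs
begin



locale seg =
  fixes n w :: nat and ty :: "nat \<Rightarrow> bool" and P :: "nat \<Rightarrow> nat \<times> nat" and s m :: nat
  assumes s_lt: "s < n" and mn: "m + 2*w \<le> n"
    and Pb: "\<forall>t. fst (P t) < n \<and> snd (P t) < n \<and> fst (P t) \<noteq> snd (P t)"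
begin

abbreviation "oc t \<equiv> occ n w ty P t"
abbreviation "N k \<equiv> nd n s k"
definition g :: "nat \<Rightarrow> int \<Rightarrow> int" where "g t j = sgnb (lab n w ty P t (N j))"
definition Q where "Q t a = (\<exists>t'<t. satisfied_at n w ty P t' a)"

lemma n_pos: "0 < n" using s_lt by simp

lemma nd_lt: "nd n s' k < n"
  unfolding nd_def using n_pos by (simp add: nat_less_iff)

lemma nd_nd: "nd n (nd n s k) j = nd n s (k+j)"
proof -
  have "int (nat ((int s + k) mod int n)) = (int s + k) mod int n" using n_pos by simp
  then show ?thesis unfolding nd_def by (simp add: mod_add_left_eq add.assoc)
qed

lemma nd_inj: assumes "hi - lo < int n" shows "inj_on N {lo..hi}"
proof
  fix x y assume x: "x \<in> {lo..hi}" and y: "y \<in> {lo..hi}" and e: "N x = N y"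
  have p1: "(int s + x) mod int n \<ge> 0" "(int s + y) mod int n \<ge> 0" using n_pos by simp_all
  have "(int s + x) mod int n = (int s + y) mod int n"
    using e p1 unfolding nd_def by simp
  then have "int n dvd ((int s + x) - (int s + y))" by (simp only: mod_eq_dvd_iff)
  then have d: "int n dvd (x - y)" by simp
  have "\<bar>x - y\<bar> < int n" using x y assms by auto
  show "x = y"
  proof (rule ccontr)
    assume "x \<noteq> y"
    then have "x - y \<noteq> 0" by simp
    from dvd_imp_le_int[OF this d] have "\<bar>int n\<bar> \<le> \<bar>x - y\<bar>" .
    with \<open>\<bar>x - y\<bar> < int n\<close> show False by simp
  qed
qed

lemma occ_perm: "inj_on (oc t) {..<n} \<and> oc t ` {..<n} \<subseteq> {..<n}"
proof (induction t)
  case 0 then show ?case by simp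
next
  case (Suc t)
  obtain a b where ab: "P t = (a,b)" by fastforce
  have "a < n" "b < n" using Pb ab by (metis fst_conv snd_conv)+
  then show ?case using Suc ab
    unfolding occ.simps step_def Let_def inj_on_def
    by (auto split: if_splits)
qed

lemma occ_inj: "v < n \<Longrightarrow> v' < n \<Longrightarrow> oc t v = oc t v' \<Longrightarrow> v = v'"
  using occ_perm[of t] unfolding inj_on_def by blast

lemma changed: "v < n \<Longrightarrow> oc t v \<noteq> v \<Longrightarrow> Q t v"
proof (induction t)
  case 0 then show ?case by simp
next
  case (Suc t)
  show ?case
  proof (cases "oc t v = v")
    case False then show ?thesis using Suc unfolding Q_def using less_Suc_eq by blast
  next
    case True
    obtain a b where ab: "P t = (a,b)" by fastforce
    from Suc.prems(2) True ab have c: "unhappy_ind_of n w ty (oc t) a \<and> unhappy_ind_of n w ty (oc t) b \<and> ty a \<noteq> ty b"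
      and vab: "v = a \<or> v = b"
      unfolding occ.simps step_def Let_def by (auto split: if_splits)
    have "satisfied_at n w ty P t v"
      unfolding satisfied_at_def unhappy_def using c vab ab by auto
    then show ?thesis unfolding Q_def by blast
  qed
qed

lemma sat_lt: "sat_time n w ty P a < enat t \<longleftrightarrow> Q t a"
proof
  assume h: "sat_time n w ty P a < enat t"
  then have ex: "\<exists>t. satisfied_at n w ty P t a" unfolding sat_time_def by (auto split: if_splits)
  then have "(LEAST t. satisfied_at n w ty P t a) < t" using h unfolding sat_time_def by simp
  then show "Q t a" unfolding Q_def using LeastI_ex[OF ex] by blast
next
  assume "Q t a"
  then obtain t' where t': "t' < t" "satisfied_at n w ty P t' a" unfolding Q_def by blast
  then have "(LEAST t. satisfied_at n w ty P t a) \<le> t'" by (simp add: Least_le)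
  then show "sat_time n w ty P a < enat t" unfolding sat_time_def using t' by auto
qed

lemma lab0: "lab n w ty P 0 v = ty v" unfolding lab_def by simp

lemma bias_win: "bias n w ty P t (N k) = (\<Sum>j\<in>{k - int w..k + int w}. g t j)"
proof -
  have "bias n w ty P t (N k) = (\<Sum>j\<in>{- int w..int w}. g t (k + j))"
    unfolding bias_def bias_of_def g_def lab_def nd_nd by simp
  also have "\<dots> = (\<Sum>j\<in>{k - int w..k + int w}. g t j)"
    by (rule sum.reindex_bij_witness[where i="\<lambda>j. j - k" and j="\<lambda>j. k + j"]) auto
  finally show ?thesis .
qed

definition I where "I t = (\<forall>k\<in>{0..<int m}. \<not> lab n w ty P t (N k) \<longrightarrow> oc t (N k) = N k \<and> \<not> Q t (N k))"

lemma g0: "g 0 j = sgnb (ty (N j))" unfolding g_def lab0 by simp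

lemma gA: "g 0 j - 2 * of_bool (ty (N j) \<and> Q t (N j)) \<le> g t j"
proof (cases "oc t (N j) = N j")
  case True then show ?thesis unfolding g_def lab_def by simp
next
  case False
  then have "Q t (N j)" using changed nd_lt by blast
  then show ?thesis unfolding g0 by (auto simp: g_def sgnb_def)
qed

lemma gF: assumes "I t" "k \<in> {0..<int m}"
  shows "g 0 k \<le> g t k \<and> (\<not> ty (N k) \<and> Q t (N k) \<longrightarrow> g t k = 1)"
  using assms unfolding I_def g_def lab_def sgnb_def by auto

end



lemma trans_list:
  fixes c :: "'a \<Rightarrow> int"
  assumes "distinct cs" "sorted_wrt (\<lambda>a b. st b \<le> st a) cs" "length sg = length cs"
    "mset sg = mset (map c cs)" "\<forall>i<length cs. st (cs!i) \<le> enat t0 \<longrightarrow> sg!i = c (cs!i)"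
    "\<forall>k\<le>length sg. sum_list (take k sg) \<ge> 0" "t \<le> t0"
  shows "(\<Sum>a\<in>{a\<in>set cs. st a < enat t}. c a) \<le> (\<Sum>a\<in>set cs. c a)"
proof -
  define p where "p = length (takeWhile (\<lambda>a. \<not> st a < enat t) cs)"
  have pl: "p \<le> length cs" unfolding p_def by (rule length_takeWhile_le)
  have dr: "st (cs!i) < enat t" if "p \<le> i" "i < length cs" for i
  proof -
    have pp: "st (cs!p) < enat t" using nth_length_takeWhile[of "\<lambda>a. \<not> st a < enat t" cs] that
      unfolding p_def by simp
    show ?thesis
    proof (cases "i = p")
      case True then show ?thesis using pp by simp
    next
      case False
      then have "st (cs!i) \<le> st (cs!p)" using assms(2) that
        by (simp add: sorted_wrt_iff_nth_less)
      then show ?thesis using pp by (meson order_le_less_trans)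
    qed
  qed
  have tw: "\<forall>x\<in>set (takeWhile (\<lambda>a. \<not> st a < enat t) cs). \<not> st x < enat t"
    by (auto dest: set_takeWhileD)
  have dw: "\<forall>x\<in>set (drop p cs). st x < enat t"
    using dr by (auto simp: in_set_conv_nth)
  have "filter (\<lambda>a. st a < enat t) cs = drop p cs"
  proof -
    have "cs = takeWhile (\<lambda>a. \<not> st a < enat t) cs @ drop p cs"
      unfolding p_def by (metis takeWhile_dropWhile_id dropWhile_eq_drop)
    then have "filter (\<lambda>a. st a < enat t) cs = filter (\<lambda>a. st a < enat t) (takeWhile (\<lambda>a. \<not> st a < enat t) cs) @ filter (\<lambda>a. st a < enat t) (drop p cs)"
      by (metis filter_append)
    also have "\<dots> = drop p cs" using tw dw by simp
    finally show ?thesis .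
  qed
  then have e1: "(\<Sum>a\<in>{a\<in>set cs. st a < enat t}. c a) = sum_list (map c (drop p cs))"
    using assms(1) by (metis distinct_filter set_filter sum_list_distinct_conv_sum_set)
  have e2: "(\<Sum>a\<in>set cs. c a) = sum_list (map c cs)"
    using assms(1) by (simp add: sum_list_distinct_conv_sum_set)
  have e3: "drop p sg = drop p (map c cs)"
  proof (rule nth_equalityI)
    show "length (drop p sg) = length (drop p (map c cs))" using assms(3) by simp
    fix i assume "i < length (drop p sg)"
    then have i: "p + i < length cs" using assms(3) by simp
    then have "st (cs!(p+i)) \<le> enat t0" using dr[of "p+i"] assms(7)
      by (meson enat_ord_simps(1) le_add1 less_imp_le order_less_le_trans)
    then show "drop p sg ! i = drop p (map c cs) ! i" using assms(5) i assms(3) pl by simp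
  qed
  have e4: "sum_list sg = sum_list (map c cs)"
    by (metis assms(4) sum_mset_sum_list)
  have e5: "sum_list sg = sum_list (take p sg) + sum_list (drop p sg)"
    by (metis append_take_drop_id sum_list_append)
  have "sum_list (take p sg) \<ge> 0" using assms(6) pl assms(3) by simp
  moreover have "sum_list (map c cs) = sum_list (take p (map c cs)) + sum_list (map c (drop p cs))"
    by (metis append_take_drop_id drop_map sum_list_append)
  ultimately show ?thesis using e1 e2 e3 e4 e5 by (simp add: drop_map)
qed

context seg begin

lemma comb:
  assumes "finite A" "finite D" "A \<inter> D = {}" "inj_on N (A \<union> D)"
  shows "(\<Sum>a\<in>{a\<in>{a. (\<exists>k\<in>A. a = N k) \<and> ty a} \<union> {a. (\<exists>k\<in>D. a = N k) \<and> \<not> ty a}. R a}. sgnb (ty a))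
     = (\<Sum>j\<in>A. of_bool (ty (N j) \<and> R (N j))) - (\<Sum>j\<in>D. of_bool (\<not> ty (N j) \<and> R (N j)))"
proof -
  define S1 where "S1 = {j\<in>A. ty (N j) \<and> R (N j)}"
  define S2 where "S2 = {j\<in>D. \<not> ty (N j) \<and> R (N j)}"
  have set: "{a\<in>{a. (\<exists>k\<in>A. a = N k) \<and> ty a} \<union> {a. (\<exists>k\<in>D. a = N k) \<and> \<not> ty a}. R a} = N ` S1 \<union> N ` S2"
    unfolding S1_def S2_def by auto
  have dis: "N ` S1 \<inter> N ` S2 = {}" unfolding S1_def S2_def by auto
  have f: "finite S1" "finite S2" unfolding S1_def S2_def using assms by auto
  have i1: "inj_on N S1" "inj_on N S2" using assms(4) unfolding S1_def S2_def
    by (auto intro: inj_on_subset)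
  have "(\<Sum>a\<in>N ` S1 \<union> N ` S2. sgnb (ty a)) = (\<Sum>a\<in>N ` S1. sgnb (ty a)) + (\<Sum>a\<in>N ` S2. sgnb (ty a))"
    using dis f by (simp add: sum.union_disjoint)
  also have "(\<Sum>a\<in>N ` S1. sgnb (ty a)) = (\<Sum>j\<in>S1. sgnb (ty (N j)))" using i1 by (simp add: sum.reindex)
  also have "\<dots> = (\<Sum>j\<in>S1. 1)" unfolding S1_def sgnb_def by simp
  also have "\<dots> = (\<Sum>j\<in>A. of_bool (ty (N j) \<and> R (N j)))"
    unfolding S1_def using assms(1) by (simp add: sum.inter_filter[symmetric] of_bool_def)
  also have "(\<Sum>a\<in>N ` S2. sgnb (ty a)) = (\<Sum>j\<in>S2. sgnb (ty (N j)))" using i1 by (simp add: sum.reindex)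
  also have "\<dots> = (\<Sum>j\<in>S2. -1)" unfolding S2_def sgnb_def by simp
  also have "\<dots> = - (\<Sum>j\<in>D. of_bool (\<not> ty (N j) \<and> R (N j)))"
    unfolding S2_def using assms(2) by (simp add: sum.inter_filter[symmetric] of_bool_def sum_negf)
  finally show ?thesis using set by simp
qed

end


context seg begin

lemma side:
  assumes It: "I t" and fin: "finite A" "finite D" "finite W" and dis: "A \<inter> D = {}" and inj: "inj_on N (A \<union> D)"
    and DW: "D \<subseteq> W" and WF: "W \<subseteq> A \<union> D \<union> {0..<int m}" and DF: "D \<subseteq> {0..<int m}"
    and hyp: "(\<Sum>j\<in>A \<union> D. g 0 j) \<le> (\<Sum>j\<in>W. g 0 j)"
    and cd: "card D = card A + 1"
    and C: "C = {a. (\<exists>k\<in>A. a = N k) \<and> ty a} \<union> {a. (\<exists>k\<in>D. a = N k) \<and> \<not> ty a}"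
    and tr: "(\<Sum>a\<in>{a\<in>C. Q t a}. sgnb (ty a)) \<le> (\<Sum>a\<in>C. sgnb (ty a))"
  shows "(\<Sum>j\<in>W. g t j) > 0"
proof -
  define xa where "xa j = (of_bool (ty (N j) \<and> Q t (N j)) :: int)" for j
  define od where "od j = (of_bool (\<not> ty (N j) \<and> Q t (N j)) :: int)" for j
  define h where "h j = (if j \<in> A then - (2 * xa j) else 0) + (if j \<in> D then 2 * od j else 0)" for j
  have pw: "g 0 j + h j \<le> g t j" if j: "j \<in> W" for j
  proof (cases "j \<in> A")
    case True
    then have "j \<notin> D" using dis by auto
    then show ?thesis using True gA[of j t] unfolding h_def xa_def by simp
  next
    case False
    then have jF: "j \<in> {0..<int m}" using j WF DF by blast
    show ?thesis
    proof (cases "j \<in> D \<and> \<not> ty (N j) \<and> Q t (N j)")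
      case True
      then show ?thesis using False gF[OF It jF] unfolding h_def od_def g0 sgnb_def by simp
    next
      case F2: False
      then show ?thesis using False gF[OF It jF] unfolding h_def od_def by auto
    qed
  qed
  have s1: "(\<Sum>j\<in>W. g 0 j) + (\<Sum>j\<in>W. h j) \<le> (\<Sum>j\<in>W. g t j)"
    using pw by (simp add: sum.distrib[symmetric] sum_mono)
  have sh: "(\<Sum>j\<in>W. h j) = (\<Sum>j\<in>W \<inter> A. - (2 * xa j)) + (\<Sum>j\<in>W \<inter> D. 2 * od j)"
    unfolding h_def sum.distrib using fin by (simp add: sum.inter_restrict)
  have "W \<inter> D = D" using DW by auto
  moreover have "(\<Sum>j\<in>W \<inter> A. xa j) \<le> (\<Sum>j\<in>A. xa j)"
    by (rule sum_mono2) (use fin in \<open>auto simp: xa_def\<close>)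
  ultimately have s2: "(\<Sum>j\<in>W. h j) \<ge> -2 * (\<Sum>j\<in>A. xa j) + 2 * (\<Sum>j\<in>D. od j)"
    using sh by (simp add: sum_negf sum_distrib_left[symmetric])
  have cq: "(\<Sum>a\<in>{a\<in>C. Q t a}. sgnb (ty a)) = (\<Sum>j\<in>A. xa j) - (\<Sum>j\<in>D. od j)"
    unfolding C xa_def od_def by (rule comb[OF fin(1,2) dis inj])
  have cc: "(\<Sum>a\<in>C. sgnb (ty a)) = (\<Sum>j\<in>A. of_bool (ty (N j))) - (\<Sum>j\<in>D. of_bool (\<not> ty (N j)))"
  proof -
    have "{a\<in>C. True} = C" by simp
    then show ?thesis using comb[OF fin(1,2) dis inj, of "\<lambda>_. True"] unfolding C by simp
  qed
  have gA0: "(\<Sum>j\<in>A. g 0 j) = 2 * (\<Sum>j\<in>A. of_bool (ty (N j))) - int (card A)"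
  proof -
    have "(\<Sum>j\<in>A. g 0 j) = (\<Sum>j\<in>A. 2 * of_bool (ty (N j)) - 1)"
      by (rule sum.cong) (auto simp: g0 sgnb_def)
    then show ?thesis by (simp add: sum_subtractf sum_distrib_left)
  qed
  have gD0: "(\<Sum>j\<in>D. g 0 j) = int (card D) - 2 * (\<Sum>j\<in>D. of_bool (\<not> ty (N j)))"
  proof -
    have "(\<Sum>j\<in>D. g 0 j) = (\<Sum>j\<in>D. 1 - 2 * of_bool (\<not> ty (N j)))"
      by (rule sum.cong) (auto simp: g0 sgnb_def)
    then show ?thesis by (simp add: sum_subtractf sum_distrib_left)
  qed
  have "(\<Sum>j\<in>A \<union> D. g 0 j) = (\<Sum>j\<in>A. g 0 j) + (\<Sum>j\<in>D. g 0 j)"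
    using fin dis by (simp add: sum.union_disjoint)
  then show ?thesis using s1 s2 cq cc gA0 gD0 hyp tr cd by linarith
qed

end


context seg begin

lemma tr_of:
  assumes "pseudo_transcript n w ty P s m C sg" "partial_sums_nonneg sg"
  shows "\<exists>t0. calm_time n w ty P s m t0 \<and>
    (\<forall>t\<le>t0. (\<Sum>a\<in>{a\<in>C. Q t a}. sgnb (ty a)) \<le> (\<Sum>a\<in>C. sgnb (ty a)))"
proof -
  obtain t0 cs where h: "calm_time n w ty P s m t0" "distinct cs" "set cs = C"
    "sorted_wrt (\<lambda>a b. sat_time n w ty P b \<le> sat_time n w ty P a) cs"
    "length sg = length cs" "mset sg = mset (map (\<lambda>a. sgnb (ty a)) cs)"
    "\<forall>i<length cs. sat_time n w ty P (cs ! i) \<le> enat t0 \<longrightarrow> sg ! i = sgnb (ty (cs ! i))"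
    using assms(1) unfolding pseudo_transcript_def by blast
  have "(\<Sum>a\<in>{a\<in>C. Q t a}. sgnb (ty a)) \<le> (\<Sum>a\<in>C. sgnb (ty a))" if "t \<le> t0" for t
  proof -
    have "(\<Sum>a\<in>{a\<in>set cs. sat_time n w ty P a < enat t}. sgnb (ty a)) \<le> (\<Sum>a\<in>set cs. sgnb (ty a))"
      by (rule trans_list[OF h(2,4,5,6,7)]) (use assms(2) that in \<open>auto simp: partial_sums_nonneg_def\<close>)
    then show ?thesis using h(3) by (simp add: sat_lt)
  qed
  then show ?thesis using h(1) by blast
qed

lemma bias_pos:
  assumes It: "I t" and inc: "x_firewall_incubator n w ty P s m"
    and trL: "(\<Sum>a\<in>{a\<in>left_combatants n w ty s m. Q t a}. sgnb (ty a)) \<le> (\<Sum>a\<in>left_combatants n w ty s m. sgnb (ty a))"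
    and trR: "(\<Sum>a\<in>{a\<in>right_combatants n w ty s m. Q t a}. sgnb (ty a)) \<le> (\<Sum>a\<in>right_combatants n w ty s m. sgnb (ty a))"
    and k: "k \<in> {0..<int m}"
  shows "bias n w ty P t (N k) > 0"
proof -
  have m2: "2 * (w + 1) \<le> m" using inc unfolding x_firewall_incubator_def by simp
  have incL: "\<forall>k\<in>{0..int w}. bias n w ty P 0 (N 0) \<le> bias n w ty P 0 (N k)"
    and incR: "\<forall>k\<in>{int m - int w - 1..int m - 1}. bias n w ty P 0 (N (int m - 1)) \<le> bias n w ty P 0 (N k)"
    and incP: "\<forall>k\<in>{0..<int m}. real_of_int (bias n w ty P 0 (N k)) > sqrt (real w)"
    using inc unfolding x_firewall_incubator_def by auto
  show ?thesis
  proof (cases "k \<le> int w")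
    case True
    have "(\<Sum>j\<in>{k - int w..k + int w}. g t j) > 0"
    proof (rule side[OF It, where A="{- int w..-1}" and D="{0..int w}"])
      show "inj_on N ({- int w..-1} \<union> {0..int w})"
      proof (rule inj_on_subset)
        show "inj_on N {- int w..int w}" using nd_inj[of "int w" "- int w"] mn m2 by simp
      qed auto
    next
      have "(\<Sum>j\<in>{- int w..-1} \<union> {0..int w}. g 0 j) = bias n w ty P 0 (N 0)"
      proof -
        have "{- int w..-1} \<union> {0..int w} = {0 - int w..0 + int w}" by auto
        then show ?thesis by (simp add: bias_win)
      qed
      also have "\<dots> \<le> bias n w ty P 0 (N k)" using incL True k by auto
      finally show "(\<Sum>j\<in>{- int w..-1} \<union> {0..int w}. g 0 j) \<le> (\<Sum>j\<in>{k - int w..k + int w}. g 0 j)"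
        by (simp add: bias_win)
    next
      show "card {0..int w} = card {- int w..-1} + 1" by simp
    next
      show "left_combatants n w ty s m = {a. (\<exists>k\<in>{- int w..-1}. a = N k) \<and> ty a} \<union> {a. (\<exists>k\<in>{0..int w}. a = N k) \<and> \<not> ty a}"
        unfolding left_combatants_def ..
    qed (use trL True k m2 in auto)
    then show ?thesis by (simp add: bias_win)
  next
    case False
    show ?thesis
    proof (cases "k \<ge> int m - int w - 1")
      case True
      have "(\<Sum>j\<in>{k - int w..k + int w}. g t j) > 0"
      proof (rule side[OF It, where A="{int m..int m + int w - 1}" and D="{int m - int w - 1..int m - 1}"])
        show "inj_on N ({int m..int m + int w - 1} \<union> {int m - int w - 1..int m - 1})"
        proof (rule inj_on_subset)
          show "inj_on N {int m - int w - 1..int m + int w - 1}" using nd_inj[of "int m + int w - 1" "int m - int w - 1"] mn m2 by simp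
        qed auto
      next
        have "(\<Sum>j\<in>{int m..int m + int w - 1} \<union> {int m - int w - 1..int m - 1}. g 0 j) = bias n w ty P 0 (N (int m - 1))"
        proof -
          have "{int m..int m + int w - 1} \<union> {int m - int w - 1..int m - 1} = {(int m - 1) - int w..(int m - 1) + int w}" by auto
          then show ?thesis by (simp add: bias_win)
        qed
        also have "\<dots> \<le> bias n w ty P 0 (N k)" using incR True k by auto
        finally show "(\<Sum>j\<in>{int m..int m + int w - 1} \<union> {int m - int w - 1..int m - 1}. g 0 j) \<le> (\<Sum>j\<in>{k - int w..k + int w}. g 0 j)"
          by (simp add: bias_win)
      next
        show "card {int m - int w - 1..int m - 1} = card {int m..int m + int w - 1} + 1" by simp
      next
        show "right_combatants n w ty s m = {a. (\<exists>k\<in>{int m..int m + int w - 1}. a = N k) \<and> ty a} \<union> {a. (\<exists>k\<in>{int m - int w - 1..int m - 1}. a = N k) \<and> \<not> ty a}"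
          unfolding right_combatants_def ..
      qed (use trR True k m2 in auto)
      then show ?thesis by (simp add: bias_win)
    next
      case F2: False
      have W: "{k - int w..k + int w} \<subseteq> {0..<int m}" using False F2 by auto
      have "(\<Sum>j\<in>{k - int w..k + int w}. g 0 j) \<le> (\<Sum>j\<in>{k - int w..k + int w}. g t j)"
        by (rule sum_mono) (use gF[OF It] W in blast)
      moreover have "real_of_int (bias n w ty P 0 (N k)) > 0"
        using incP k by (meson less_le_trans real_sqrt_ge_zero of_nat_0_le_iff le_less_trans not_less)
      then have "bias n w ty P 0 (N k) > 0" by simp
      ultimately show ?thesis unfolding bias_win by linarith
    qed
  qed
qed

end


context seg begin

lemma happy_x: assumes "v < n" "ty (oc t v)" "bias n w ty P t v > 0"
  shows "\<not> unhappy_ind_of n w ty (oc t) (oc t v)"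
proof
  assume "unhappy_ind_of n w ty (oc t) (oc t v)"
  then obtain v' where v': "v' < n" "oc t v' = oc t v" "unhappy_node_of n w ty (oc t) v'"
    unfolding unhappy_ind_of_def by blast
  then have "v' = v" using occ_inj assms(1) by blast
  then show False using v' assms unfolding unhappy_node_of_def bias_def by simp
qed

lemma unhappy_o: assumes "v < n" "\<not> ty (oc t v)" "bias n w ty P t v > 0"
  shows "unhappy_ind_of n w ty (oc t) (oc t v)"
  using assms unfolding unhappy_ind_of_def unhappy_node_of_def bias_def by auto

lemma I0: "I 0" unfolding I_def Q_def by simp

lemma I_step:
  assumes It: "I t" and B: "\<forall>k\<in>{0..<int m}. bias n w ty P t (N k) > 0"
  shows "I (Suc t)"
  unfolding I_def
proof (intro ballI impI)
  fix k assume k: "k \<in> {0..<int m}" and nl: "\<not> lab n w ty P (Suc t) (N k)"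
  define v where "v = N k"
  have vn: "v < n" unfolding v_def by (rule nd_lt)
  have bv: "bias n w ty P t v > 0" using B k unfolding v_def by blast
  obtain a b where ab: "P t = (a,b)" by fastforce
  let ?c = "unhappy_ind_of n w ty (oc t) a \<and> unhappy_ind_of n w ty (oc t) b \<and> ty a \<noteq> ty b"
  have os: "oc (Suc t) v = (if ?c then (if oc t v = a then b else if oc t v = b then a else oc t v) else oc t v)"
    using ab unfolding occ.simps step_def Let_def by simp
  show "oc (Suc t) (N k) = N k \<and> \<not> Q (Suc t) (N k)"
  proof (cases ?c)
    case c: True
    show ?thesis
    proof (cases "oc t v = a \<or> oc t v = b")
      case True
      then have "ty (oc t v) \<or> ty (oc (Suc t) v)" using os c by auto
      moreover have "\<not> ty (oc t v)"
      proof
        assume "ty (oc t v)"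
        then have "\<not> unhappy_ind_of n w ty (oc t) (oc t v)" using happy_x vn bv by blast
        then show False using True c by auto
      qed
      ultimately have "ty (oc (Suc t) v)" by simp
      then show ?thesis using nl unfolding v_def lab_def by simp
    next
      case False
      then have e: "oc (Suc t) v = oc t v" using os by simp
      then have "\<not> lab n w ty P t v" using nl unfolding v_def lab_def by simp
      then have ih: "oc t v = v" "\<not> Q t v" using It k unfolding I_def v_def by auto
      have "\<not> satisfied_at n w ty P t v"
        using False ih ab unfolding satisfied_at_def by auto
      then have "\<not> Q (Suc t) v" using ih(2) unfolding Q_def using less_Suc_eq by auto
      then show ?thesis using e ih unfolding v_def by simp
    qed
  next
    case nc: False
    then have e: "oc (Suc t) v = oc t v" using os by simp
    then have nl0: "\<not> lab n w ty P t v" using nl unfolding v_def lab_def by simp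
    then have ih: "oc t v = v" "\<not> Q t v" using It k unfolding I_def v_def by auto
    have uv: "unhappy_ind_of n w ty (oc t) v"
      using unhappy_o[OF vn _ bv] nl0 ih(1) unfolding lab_def by simp
    have "\<not> satisfied_at n w ty P t v"
    proof
      assume "satisfied_at n w ty P t v"
      then obtain b' where "P t = (v, b') \<or> P t = (b', v)" "unhappy_ind_of n w ty (oc t) b'" "ty b' \<noteq> ty v"
        unfolding satisfied_at_def unhappy_def by blast
      then show False using nc uv ab by auto
    qed
    then have "\<not> Q (Suc t) v" using ih(2) unfolding Q_def using less_Suc_eq by auto
    then show ?thesis using e ih unfolding v_def by simp
  qed
qed

lemma main:
  assumes inc: "x_firewall_incubator n w ty P s m"
    and L: "\<exists>sg. pseudo_transcript n w ty P s m (left_combatants n w ty s m) sg \<and> partial_sums_nonneg sg"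
    and R: "\<exists>sg. pseudo_transcript n w ty P s m (right_combatants n w ty s m) sg \<and> partial_sums_nonneg sg"
  shows "\<exists>t. \<forall>k\<in>{0..<int m}. lab n w ty P t (N k)"
proof -
  obtain t1 where t1: "calm_time n w ty P s m t1"
    "\<forall>t\<le>t1. (\<Sum>a\<in>{a\<in>left_combatants n w ty s m. Q t a}. sgnb (ty a)) \<le> (\<Sum>a\<in>left_combatants n w ty s m. sgnb (ty a))"
    using L tr_of by blast
  obtain t2 where t2: "calm_time n w ty P s m t2"
    "\<forall>t\<le>t2. (\<Sum>a\<in>{a\<in>right_combatants n w ty s m. Q t a}. sgnb (ty a)) \<le> (\<Sum>a\<in>right_combatants n w ty s m. sgnb (ty a))"
    using R tr_of by blast
  define t0 where "t0 = min t1 t2"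
  have calm: "calm_time n w ty P s m t0" unfolding t0_def using t1 t2 by (simp add: min_def)
  have BP: "I t \<Longrightarrow> t \<le> t0 \<Longrightarrow> \<forall>k\<in>{0..<int m}. bias n w ty P t (N k) > 0" for t
    using bias_pos[OF _ inc] t1(2) t2(2) unfolding t0_def by simp
  have It: "t \<le> t0 \<longrightarrow> I t" for t
  proof (induction t)
    case 0 then show ?case using I0 by simp
  next
    case (Suc t) then show ?case using I_step BP by simp
  qed
  have I0': "I t0" using It by simp
  have B0: "\<forall>k\<in>{0..<int m}. bias n w ty P t0 (N k) > 0" using BP I0' by simp
  have "\<forall>k\<in>{0..<int m}. lab n w ty P t0 (N k)"
  proof (intro ballI, rule ccontr)
    fix k assume k: "k \<in> {0..<int m}" and nl: "\<not> lab n w ty P t0 (N k)"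
    have ih: "oc t0 (N k) = N k" "\<not> Q t0 (N k)" using I0' k nl unfolding I_def by auto
    have "unhappy n w ty P t0 (N k)"
      using unhappy_o[OF nd_lt _ ] B0 k nl ih(1) unfolding unhappy_def lab_def by (metis)
    moreover have "enat t0 \<le> sat_time n w ty P (N k)" using ih(2) sat_lt not_le by blast
    ultimately have "impatient n w ty P t0 (oc t0 (N k))" unfolding impatient_def ih(1) by simp
    then show False using calm k unfolding calm_time_def by blast
  qed
  then show ?thesis by blast
qed

end


theorem proposition3:
  fixes n w s m :: nat and ty :: "nat \<Rightarrow> bool" and P :: "nat \<Rightarrow> nat \<times> nat"
  assumes "s < n"
    and "m + 2 * w \<le> n"
    and "\<forall>t. fst (P t) < n \<and> snd (P t) < n \<and> fst (P t) \<noteq> snd (P t)"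
    and "x_firewall_incubator n w ty P s m"
    and "\<exists>sg. pseudo_transcript n w ty P s m (left_combatants n w ty s m) sg \<and> partial_sums_nonneg sg"
    and "\<exists>sg. pseudo_transcript n w ty P s m (right_combatants n w ty s m) sg \<and> partial_sums_nonneg sg"
  shows "\<exists>t. \<forall>k\<in>{0..<int m}. lab n w ty P t (nd n s k)"
proof -
  interpret seg n w ty P s m by unfold_locales (use assms(1-3) in auto)
  show ?thesis using main assms(4-6) by blast
qed

end
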